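(* Assume (A1)–(A3) and $\alpha>1$, and let a value $A>0$ be given. Among all concentration profiles $C$ with $AUC[C]=A$, the one maximizing $LR_{max}[C]$ is $$C(t)=\begin{cases} c_{opt}, & 0\le t\le T,\\ 0,& t>T,\end{cases}\qquad T=\frac{A}{c_{opt}},$$ where $c_{opt}$ is the unique solution in $(0,\infty)$ of $k'(c)=\frac{k(c)-r}{c}$; and the maximal log-reduction attained is $$LR_{opt}=\frac{1}{\ln(10)}\cdot\frac{k(c_{opt})-r}{c_{opt}}\cdot A.$$
   Context: Let $r>0$ and let $k:[0,\infty)\to[0,\infty)$ satisfy: (A1) $k(0)=0$, $k$ is continuous and strictly increasing on $[0,\infty)$, and twice differentiable on $(0,\infty)$; (A2) $\lim_{c\to\infty}k(c)=k_{max}<\infty$; (A3) either (i) (concave case) $k''(c)<0$ for all $c>0$, or (ii) (sigmoidal case) there is $c_{infl}>0$ with $k''(c)>0$ for $0<c<c_{infl}$ and $k''(c)<0$ for $c>c_{infl}$. Set $\alpha=k_{max}/r$. A concentration profile is a non-negative function $C\in L^1[0,\infty)$, with $AUC[C]=\int_0^\infty C(t)\,dt$. For $T\ge0$, $LR(T)=\frac{1}{\ln 10}\int_0^T[k(C(t))-r]\,dt$, and $LR_{max}[C]=\max_{T\ge0}LR(T)$. *)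

theory Defs
  imports "HOL-Analysis.Analysis"
begin

text \<open>A concentration profile: a non-negative integrable function on [0,\<infinity>).
  Values for t < 0 are irrelevant.\<close>
definition profile :: "(real \<Rightarrow> real) \<Rightarrow> bool" where
  "profile C \<longleftrightarrow> (\<forall>t\<ge>0. C t \<ge> 0) \<and> C integrable_on {0..}"

definition AUC :: "(real \<Rightarrow> real) \<Rightarrow> real" where
  "AUC C = integral {0..} C"

definition LR :: "(real \<Rightarrow> real) \<Rightarrow> real \<Rightarrow> (real \<Rightarrow> real) \<Rightarrow> real \<Rightarrow> real" where
  "LR k r C T = (1 / ln 10) * integral {0..T} (\<lambda>t. k (C t) - r)"

text \<open>LR_max as the supremum over T \<ge> 0 (the paper's max; it is attained).\<close>
definition LRmax :: "(real \<Rightarrow> real) \<Rightarrow> real \<Rightarrow> (real \<Rightarrow> real) \<Rightarrow> real" where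
  "LRmax k r C = (SUP T\<in>{0..}. LR k r C T)"

end

theory Submission
  imports Defs
begin



locale kk =
  fixes k k' k'' :: "real \<Rightarrow> real" and r kmax :: real
  assumes r_pos: "r > 0"
    and k0: "k 0 = 0"
    and k_nonneg: "\<forall>c\<ge>0. k c \<ge> 0"
    and k_cont: "continuous_on {0..} k"
    and k_mono: "strict_mono_on {0..} k"
    and k_d1: "\<forall>c>0. (k has_real_derivative k' c) (at c)"
    and k_d2: "\<forall>c>0. (k' has_real_derivative k'' c) (at c)"
    and k_lim: "(k \<longlongrightarrow> kmax) at_top"
    and k_shape: "(\<forall>c>0. k'' c < 0) \<or>
                  (\<exists>ci>0. (\<forall>c. 0 < c \<and> c < ci \<longrightarrow> k'' c > 0) \<and> (\<forall>c>ci. k'' c < 0))"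
    and alpha: "kmax / r > 1"
begin

lemma kmax_gt: "kmax > r"
  using alpha r_pos by (simp add: field_simps)

lemma k_le_kmax: assumes "c \<ge> 0" shows "k c \<le> kmax"
proof (rule tendsto_lowerbound[OF k_lim])
  show "\<forall>\<^sub>F x in at_top. k c \<le> k x"
    using eventually_ge_at_top[of c]
  proof eventually_elim
    case (elim x) then show ?case using k_mono assms
      by (metis atLeast_iff dual_order.trans order.order_iff_strict strict_mono_onD)
  qed
qed simp

lemma k_lt_kmax: assumes "c \<ge> 0" shows "k c < kmax"
proof -
  have "k c < k (c+1)" using k_mono assms by (intro strict_mono_onD[OF k_mono]) auto
  also have "\<dots> \<le> kmax" using assms by (intro k_le_kmax) auto
  finally show ?thesis .
qed

lemma kd_nonneg: assumes "c > 0" shows "k' c \<ge> 0"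
proof (rule ccontr)
  assume "\<not> k' c \<ge> 0"
  then obtain d where d: "d > 0" "\<forall>h>0. h < d \<longrightarrow> k c > k (c + h)"
  proof -
    have "(k has_real_derivative k' c) (at c)" using k_d1 assms by auto
    from DERIV_neg_dec_right[OF this] \<open>\<not> k' c \<ge> 0\<close> show ?thesis using that by force
  qed
  have "k c > k (c + d/2)" using d by auto
  moreover have "k c < k (c + d/2)" using assms d by (intro strict_mono_onD[OF k_mono]) auto
  ultimately show False by simp
qed

lemma c0_ex: "\<exists>c0\<ge>0. (\<forall>c. 0 < c \<and> c < c0 \<longrightarrow> k'' c > 0) \<and> (\<forall>c>c0. k'' c < 0)"
  using k_shape by (metis less_eq_real_def not_less_iff_gr_or_eq order_less_trans)

definition h :: "real \<Rightarrow> real" where "h c = c * k' c - k c + r"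

lemma h_deriv: assumes "c > 0" shows "(h has_real_derivative c * k'' c) (at c)"
proof -
  have d1: "(k has_real_derivative k' c) (at c)" and d2: "(k' has_real_derivative k'' c) (at c)"
    using k_d1 k_d2 assms by auto
  have "((\<lambda>c. c * k' c - k c + r) has_real_derivative (1 * k' c + c * k'' c - k' c + 0)) (at c)"
  proof -
    have "((\<lambda>c. c * k' c) has_real_derivative (1 * k' c + c * k'' c)) (at c)"
      using DERIV_mult[OF DERIV_ident d2] by (simp add: mult.commute)
    then show ?thesis by (intro derivative_intros d1)
  qed
  then show ?thesis unfolding h_def[abs_def] by simp
qed

lemma h_cont: assumes "0 < a" shows "continuous_on {a..b} h"
  using h_deriv assms
  by (intro continuous_at_imp_continuous_on ballI) (meson DERIV_isCont atLeastAtMost_iff less_le_trans)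

lemma h_near0: "\<exists>a>0. \<forall>c. 0 < c \<and> c \<le> a \<longrightarrow> h c > 0"
proof -
  have "(k \<longlongrightarrow> k 0) (at 0 within {0..})"
    using k_cont by (simp add: continuous_on_def)
  then have "\<forall>\<^sub>F c in at 0 within {0..}. k c < r" using r_pos k0
    by (simp add: order_tendstoD(2))
  then obtain d where d: "d > 0" "\<forall>c\<in>{0..}. c \<noteq> 0 \<and> dist c 0 < d \<longrightarrow> k c < r"
    by (auto simp: eventually_at)
  show ?thesis
  proof (intro exI[of _ "d/2"] conjI allI impI)
    fix c assume c: "0 < c \<and> c \<le> d/2"
    then have "k c < r" using d by auto
    moreover have "c * k' c \<ge> 0" using kd_nonneg c by simp
    ultimately show "h c > 0" by (simp add: h_def)
  qed (use d in auto)
qed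

end


context kk begin

definition c0 where "c0 = (SOME c0. c0 \<ge> 0 \<and> (\<forall>c. 0 < c \<and> c < c0 \<longrightarrow> k'' c > 0) \<and> (\<forall>c>c0. k'' c < 0))"

lemma c0: "c0 \<ge> 0" "\<And>c. 0 < c \<Longrightarrow> c < c0 \<Longrightarrow> k'' c > 0" "\<And>c. c > c0 \<Longrightarrow> k'' c < 0"
  using someI_ex[OF c0_ex] unfolding c0_def[symmetric] by auto

lemma h_inc: assumes "0 < a" "a < b" "b \<le> c0" shows "h a < h b"
proof -
  obtain z where z: "a < z" "z < b" "h b - h a = (b - a) * (z * k'' z)"
    using MVT2[OF assms(2), of h "\<lambda>c. c * k'' c"] h_deriv assms by force
  have "z * k'' z > 0" using c0(2)[of z] z assms by auto
  then show ?thesis using z assms by (smt (verit) mult_pos_pos)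
qed

lemma h_dec: assumes "0 < a" "a < b" "c0 \<le> a" shows "h b < h a"
proof -
  obtain z where z: "a < z" "z < b" "h b - h a = (b - a) * (z * k'' z)"
    using MVT2[OF assms(2), of h "\<lambda>c. c * k'' c"] h_deriv assms by force
  have "z * k'' z < 0" using c0(3)[of z] z assms by (simp add: mult_pos_neg)
  then show ?thesis using z assms by (smt (verit) mult_pos_neg)
qed

lemma h_pos_small: assumes "0 < c" "c \<le> c0" shows "h c > 0"
proof -
  obtain a where a: "a > 0" "\<forall>c. 0 < c \<and> c \<le> a \<longrightarrow> h c > 0" using h_near0 by blast
  show ?thesis
  proof (cases "c \<le> a")
    case True then show ?thesis using a assms by auto
  next
    case False
    then have "h a < h c" using h_inc[of a c] a assms by auto
    then show ?thesis using a by force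
  qed
qed

lemma h_neg_ex: "\<exists>b>0. h b < 0"
proof -
  define e where "e = (kmax - r) / 3"
  have e: "e > 0" using kmax_gt by (simp add: e_def)
  have "\<forall>\<^sub>F x in at_top. k x > kmax - e" using k_lim e by (simp add: order_tendstoD(1))
  then obtain N where N: "\<And>x. x \<ge> N \<Longrightarrow> k x > kmax - e" by (auto simp: eventually_at_top_linorder)
  define y where "y = max N (c0 + 1)"
  have y: "y > c0" "y > 0" "k y > kmax - e" using N c0(1) by (auto simp: y_def)
  define c where "c = 2 * y"
  have yc: "y < c" "c > 0" using y by (auto simp: c_def)
  obtain z where z: "y < z" "z < c" "k c - k y = (c - y) * k' z"
    using MVT2[OF yc(1), of k k'] k_d1 y by force
  have "k' c < k' z"
  proof -
    obtain w where w: "z < w" "w < c" "k' c - k' z = (c - z) * k'' w"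
      using MVT2[OF z(2), of k' k''] k_d2 y z by force
    have "k'' w < 0" using c0(3)[of w] w z y by auto
    then show ?thesis using w by (smt (verit) mult_pos_neg)
  qed
  then have "y * k' c \<le> y * k' z" using y by (intro mult_left_mono) auto
  then have "c * k' c \<le> 2 * (k c - k y)"
    using z yc unfolding c_def by (simp add: algebra_simps)
  moreover have "k c \<le> kmax" using yc by (intro k_le_kmax) auto
  moreover have "k c \<ge> k y" using z kd_nonneg[of z] y yc by (smt (verit) mult_nonneg_nonneg)
  moreover have "3 * e = kmax - r" by (simp add: e_def)
  ultimately have "h c < 0" using y e unfolding h_def by (smt (verit))
  then show ?thesis using yc by blast
qed

lemma copt_ex: "\<exists>copt>c0. h copt = 0 \<and> (\<forall>c. 0 < c \<and> c < copt \<longrightarrow> h c > 0) \<and> (\<forall>c>copt. h c < 0)"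
proof -
  obtain b where b: "b > 0" "h b < 0" using h_neg_ex by blast
  have bc: "b > c0" using h_pos_small[of b] b by force
  obtain a where a: "a > 0" "\<forall>c. 0 < c \<and> c \<le> a \<longrightarrow> h c > 0" using h_near0 by blast
  define p where "p = (if c0 > 0 then c0 else min a (b / 2))"
  have p: "0 < p" "p < b" "h p > 0" "p \<ge> c0" using bc b c0(1) h_pos_small[of c0] a
    by (auto simp: p_def)
  obtain x where x: "p \<le> x" "x \<le> b" "h x = 0"
    using IVT2'[of h b 0 p] b p h_cont[of p b] by auto
  have xc: "x > p" using x p by (metis less_eq_real_def less_irrefl)
  show ?thesis
  proof (intro exI[of _ x] conjI allI impI)
    show "x > c0" using xc p by auto
    show "h x = 0" by fact
    fix c assume c: "0 < c \<and> c < x"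
    show "h c > 0"
    proof (cases "c \<le> c0")
      case True then show ?thesis using h_pos_small c by auto
    next
      case False then show ?thesis using h_dec[of c x] c x by auto
    qed
  next
    fix c assume "c > x" then show "h c < 0" using h_dec[of x c] x p xc by auto
  qed
qed

end


context kk begin

definition copt where "copt = (SOME x. x > c0 \<and> h x = 0 \<and> (\<forall>c. 0 < c \<and> c < x \<longrightarrow> h c > 0) \<and> (\<forall>c>x. h c < 0))"

lemma copt: "copt > c0" "h copt = 0" "\<And>c. 0 < c \<Longrightarrow> c < copt \<Longrightarrow> h c > 0" "\<And>c. c > copt \<Longrightarrow> h c < 0"
  using someI_ex[OF copt_ex] unfolding copt_def[symmetric] by auto

lemma copt_pos: "copt > 0" using copt(1) c0(1) by linarith

lemma eq_iff: assumes "c > 0" shows "k' c = (k c - r) / c \<longleftrightarrow> h c = 0"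
  using assms by (auto simp: h_def field_simps)

lemma copt_eq: "k' copt = (k copt - r) / copt" using eq_iff copt_pos copt(2) by simp

lemma copt_uniq: assumes "c > 0" "k' c = (k c - r) / c" shows "c = copt"
  using eq_iff[of c] assms copt(3)[of c] copt(4)[of c] by (metis less_irrefl linorder_neqE_linordered_idom)

definition s where "s = (k copt - r) / copt"

definition g where "g c = (k c - r) / c"

lemma g_deriv: assumes "c > 0" shows "(g has_real_derivative h c / c^2) (at c)"
proof -
  have d1: "(k has_real_derivative k' c) (at c)" using k_d1 assms by auto
  have "((\<lambda>c. (k c - r) / c) has_real_derivative ((k' c - 0) * c - (k c - r) * 1) / (c * c)) (at c)"
    by (rule DERIV_divide) (use DERIV_diff[OF d1 DERIV_const[of r]] assms in \<open>auto intro!: derivative_intros\<close>)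
  moreover have "((k' c - 0) * c - (k c - r) * 1) / (c * c) = h c / c^2"
    by (simp add: h_def power2_eq_square algebra_simps)
  ultimately show ?thesis unfolding g_def[abs_def] by simp
qed

lemma g_lt: assumes "c > 0" "c \<noteq> copt" shows "g c < g copt"
proof (cases "c < copt")
  case True
  obtain z where z: "c < z" "z < copt" "g copt - g c = (copt - c) * (h z / z^2)"
    using MVT2[OF True, of g "\<lambda>c. h c / c^2"] g_deriv assms by force
  have "h z / z^2 > 0" using copt(3)[of z] z assms by auto
  then show ?thesis using z True by (smt (verit) mult_pos_pos)
next
  case False
  then have F: "copt < c" using assms by auto
  obtain z where z: "copt < z" "z < c" "g c - g copt = (c - copt) * (h z / z^2)"
    using MVT2[OF F, of g "\<lambda>c. h c / c^2"] g_deriv copt_pos by force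
  have "h z / z^2 < 0" using copt(4)[of z] z copt_pos by (simp add: divide_neg_pos)
  then show ?thesis using z F by (smt (verit) mult_pos_neg)
qed

lemma key_strict: assumes "c \<ge> 0" "c \<noteq> copt" shows "k c - r < s * c"
proof (cases "c = 0")
  case True then show ?thesis using k0 r_pos by simp
next
  case False
  then have "g c < s" using g_lt assms by (auto simp: s_def g_def)
  then show ?thesis using False assms by (auto simp: g_def field_simps)
qed

lemma key: assumes "c \<ge> 0" shows "k c - r \<le> s * c"
  using key_strict[OF assms] copt_pos by (cases "c = copt") (auto simp: s_def)

lemma s_pos: "s > 0"
proof -
  have "\<forall>\<^sub>F x in at_top. k x > r" using k_lim kmax_gt by (simp add: order_tendstoD(1))
  then obtain N where N: "\<And>x. x \<ge> N \<Longrightarrow> k x > r" by (auto simp: eventually_at_top_linorder)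
  define c where "c = max N 1"
  have "k c - r > 0" "c > 0" using N by (auto simp: c_def)
  then have "s * c > 0" using key[of c] by linarith
  then show ?thesis using \<open>c > 0\<close> by (simp add: zero_less_mult_iff)
qed

end



lemma nonneg_int0_negligible:
  fixes f :: "real \<Rightarrow> real"
  assumes I: "(f has_integral 0) S" and S: "S \<in> sets lebesgue" and nn: "\<And>x. x \<in> S \<Longrightarrow> f x \<ge> 0"
  shows "negligible {x\<in>S. f x \<noteq> 0}"
proof -
  have fi: "f integrable_on S" using I by blast
  have ai: "f absolutely_integrable_on S" using nonnegative_absolutely_integrable_1[OF fi] nn by blast
  then have int: "integrable lebesgue (\<lambda>x. indicator S x *\<^sub>R f x)"
    by (simp add: set_integrable_def)
  have "(LINT x:S | lebesgue. f x) = integral S f" using set_lebesgue_integral_eq_integral(2)[OF ai] .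
  also have "\<dots> = 0" using I by (simp add: integral_unique)
  finally have "integral\<^sup>L lebesgue (\<lambda>x. indicator S x *\<^sub>R f x) = 0" by (simp add: set_lebesgue_integral_def)
  moreover have nnae: "AE x in lebesgue. 0 \<le> indicator S x *\<^sub>R f x"
    by (rule AE_I2) (simp add: indicator_def nn)
  ultimately have ae: "AE x in lebesgue. indicator S x *\<^sub>R f x = 0"
    using integral_nonneg_eq_0_iff_AE[OF int nnae] by simp
  have meas: "(\<lambda>x. indicator S x *\<^sub>R f x) \<in> borel_measurable lebesgue"
    using int by (rule borel_measurable_integrable)
  have sets: "{x\<in>space lebesgue. \<not> (indicator S x *\<^sub>R f x = (0::real))} \<in> sets lebesgue"
  proof -
    have "{x\<in>space lebesgue. \<not> (indicator S x *\<^sub>R f x = 0)} = (\<lambda>x. indicator S x *\<^sub>R f x) -` (UNIV - {0}) \<inter> space lebesgue" by blast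
    also have "\<dots> \<in> sets lebesgue" by (rule measurable_sets[OF meas]) simp
    finally show ?thesis .
  qed
  then have "{x\<in>space lebesgue. \<not> (indicator S x *\<^sub>R f x = (0::real))} \<in> null_sets lebesgue"
    using AE_iff_null[where P="\<lambda>x. indicator S x *\<^sub>R f x = (0::real)", OF sets] ae by simp
  moreover have "{x\<in>space lebesgue. \<not> (indicator S x *\<^sub>R f x = (0::real))} = {x\<in>S. f x \<noteq> 0}"
    by (auto split: split_indicator)
  ultimately show ?thesis by (simp add: negligible_iff_null_sets)
qed


context kk begin

lemma comp_integrable:
  fixes C :: "real \<Rightarrow> real" and T :: real
  assumes C: "\<forall>t\<ge>0. C t \<ge> 0" "C integrable_on {0..}" and T: "T \<ge> 0"
  shows "(\<lambda>t. k (C t) - r) integrable_on {0..T}" "C integrable_on {0..T}"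
proof -
  show CT: "C integrable_on {0..T}" using integrable_on_subinterval[OF C(2)] T by auto
  define k2 where "k2 x = k (max 0 x)" for x
  have "continuous_on UNIV k2" unfolding k2_def
    by (rule continuous_on_compose2[OF k_cont]) (auto intro!: continuous_intros)
  then have k2m: "k2 \<in> borel_measurable borel" by (rule borel_measurable_continuous_onI)
  have Cm: "C \<in> borel_measurable (lebesgue_on {0..T})" using CT by (rule integrable_imp_measurable)
  have m: "(\<lambda>t. k2 (C t) - r) \<in> borel_measurable (lebesgue_on {0..T})"
    using measurable_compose[OF Cm k2m] by (intro borel_measurable_diff) (auto simp: o_def)
  have gi: "(\<lambda>t. s * C t + r) integrable_on {0..T}" using integrable_cmul[OF CT, of s] by (intro integrable_add) auto
  have "(\<lambda>t. k2 (C t) - r) integrable_on {0..T}"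
  proof (rule measurable_bounded_by_integrable_imp_integrable_real[OF m gi])
    fix t assume t: "t \<in> {0..T}"
    then have Ct: "C t \<ge> 0" using C by auto
    have "k (C t) - r \<le> s * C t" using key[OF Ct] .
    moreover have "k (C t) \<ge> 0" using k_nonneg Ct by auto
    moreover have "s * C t \<ge> 0" using s_pos Ct by simp
    ultimately show "\<bar>k2 (C t) - r\<bar> \<le> s * C t + r" using Ct r_pos by (auto simp: k2_def max_def)
  qed simp
  then show "(\<lambda>t. k (C t) - r) integrable_on {0..T}"
    by (rule integrable_eq) (use C in \<open>auto simp add: k2_def\<close>)
qed

lemma LR_bound:
  fixes C :: "real \<Rightarrow> real" and T :: real
  assumes C: "\<forall>t\<ge>0. C t \<ge> 0" "C integrable_on {0..}" and T: "T \<ge> 0"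
  shows "integral {0..T} (\<lambda>t. k (C t) - r) \<le> s * integral {0..T} C"
        "integral {0..T} C \<le> integral {0..} C"
proof -
  note ci = comp_integrable[OF C T]
  have "integral {0..T} (\<lambda>t. k (C t) - r) \<le> integral {0..T} (\<lambda>t. s * C t)"
    by (rule integral_le[OF ci(1)]) (use integrable_cmul[OF ci(2), of s] key C in \<open>auto\<close>)
  then show "integral {0..T} (\<lambda>t. k (C t) - r) \<le> s * integral {0..T} C" by simp
  show "integral {0..T} C \<le> integral {0..} C"
    by (rule integral_subset_le) (use ci(2) C in auto)
qed

end


context kk begin

definition Cp :: "real \<Rightarrow> real \<Rightarrow> real" where
  "Cp A = (\<lambda>t. if 0 \<le> t \<and> t \<le> A / copt then copt else 0)"

lemma Cp_int: assumes A: "A > 0" shows "(Cp A has_integral A) {0..}"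
proof -
  have T0: "A / copt \<ge> 0" using A copt_pos by simp
  have "((\<lambda>t. copt) has_integral A) {0..A/copt}"
    using has_integral_const_real[of copt 0 "A/copt"] T0 copt_pos by simp
  then have "(Cp A has_integral A) {0..A/copt}"
    by (rule has_integral_eq[rotated]) (simp add: Cp_def)
  then show ?thesis
    by (rule has_integral_on_superset) (auto simp: Cp_def)
qed

lemma Cp_profile: assumes A: "A > 0" shows "profile (Cp A)" "AUC (Cp A) = A"
  using Cp_int[OF A] copt_pos by (auto simp: profile_def AUC_def Cp_def integral_unique)

lemma LR_le:
  fixes C :: "real \<Rightarrow> real"
  assumes C: "profile C" "AUC C = A" and T: "T \<ge> 0"
  shows "LR k r C T \<le> (1 / ln 10) * (s * A)"
proof -
  have C': "\<forall>t\<ge>0. C t \<ge> 0" "C integrable_on {0..}" using C by (auto simp: profile_def)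
  note b = LR_bound[OF C' T]
  have "integral {0..T} (\<lambda>t. k (C t) - r) \<le> s * A"
    using b s_pos C(2) unfolding AUC_def by (smt (verit) mult_left_mono)
  then show ?thesis unfolding LR_def by (simp add: divide_right_mono)
qed

lemma LR_Cp: assumes A: "A > 0" shows "LR k r (Cp A) (A / copt) = (1 / ln 10) * (s * A)"
proof -
  have "integral {0..A/copt} (\<lambda>t. k (Cp A t) - r) = integral {0..A/copt} (\<lambda>t. k copt - r)"
    by (rule integral_cong) (simp add: Cp_def)
  also have "\<dots> = (A / copt) * (k copt - r)" using A copt_pos by simp
  also have "\<dots> = s * A" using copt_pos by (simp add: s_def field_simps)
  finally show ?thesis by (simp add: LR_def)
qed

lemma LRmax_Cp: assumes A: "A > 0" shows "LRmax k r (Cp A) = (1 / ln 10) * (s * A)"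
  unfolding LRmax_def
proof (rule cSup_eq_maximum)
  show "(1 / ln 10) * (s * A) \<in> LR k r (Cp A) ` {0..}"
    using LR_Cp[OF A] A copt_pos by (metis atLeast_iff divide_nonneg_pos imageI less_imp_le)
  fix x assume "x \<in> LR k r (Cp A) ` {0..}"
  then show "x \<le> (1 / ln 10) * (s * A)" using LR_le Cp_profile[OF A] by auto
qed

lemma LRmax_le: assumes C: "profile C" "AUC C = A" shows "LRmax k r C \<le> (1 / ln 10) * (s * A)"
  unfolding LRmax_def by (rule cSUP_least) (use LR_le[OF C] in auto)

end


context kk begin

lemma uniq_ae:
  fixes C :: "real \<Rightarrow> real"
  assumes A: "A > 0" and C: "profile C" "AUC C = A" and opt: "LRmax k r C = (1 / ln 10) * (s * A)"
  shows "negligible {t\<in>{0..}. C t \<noteq> Cp A t}"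
proof -
  have Cn: "\<And>t. t \<ge> 0 \<Longrightarrow> C t \<ge> 0" and Ci: "C integrable_on {0..}" using C by (auto simp: profile_def)
  have C': "\<forall>t\<ge>0. C t \<ge> 0" using Cn by auto
  have CA: "(C has_integral A) {0..}" using Ci C(2) by (metis AUC_def integrable_integral)
  define \<phi> where "\<phi> t = s * C t - (k (C t) - r)" for t
  define \<Phi> where "\<Phi> T = integral {0..T} \<phi>" for T
  define I where "I T = integral {0..T} C" for T
  define F where "F T = integral {0..T} (\<lambda>t. k (C t) - r)" for T
  define G where "G T = s * (A - I T) + \<Phi> T" for T
  have \<phi>n: "\<And>t. t \<ge> 0 \<Longrightarrow> \<phi> t \<ge> 0" using key Cn by (simp add: \<phi>_def)
  have \<phi>pos: "\<And>t. t \<ge> 0 \<Longrightarrow> C t \<noteq> copt \<Longrightarrow> \<phi> t > 0" using key_strict Cn by (simp add: \<phi>_def)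
  have Cint: "\<And>T. T \<ge> 0 \<Longrightarrow> C integrable_on {0..T}" and kint: "\<And>T. T \<ge> 0 \<Longrightarrow> (\<lambda>t. k (C t) - r) integrable_on {0..T}"
    using comp_integrable[OF C'] Ci by auto
  have \<phi>int: "\<phi> integrable_on {0..T}" if "T \<ge> 0" for T
    unfolding \<phi>_def using integrable_cmul[OF Cint[OF that], of s] kint[OF that] integrable_diff[of "\<lambda>t. s * C t" "{0..T}" "\<lambda>t. k (C t) - r"] by simp
  have \<Phi>eq: "\<Phi> T = s * I T - F T" if "T \<ge> 0" for T
    unfolding \<Phi>_def I_def F_def \<phi>_def
    using integral_diff[OF _ kint[OF that], of "\<lambda>t. s * C t"] integrable_cmul[OF Cint[OF that], of s] by simp
  have \<Phi>n: "\<Phi> T \<ge> 0" if "T \<ge> 0" for T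
    unfolding \<Phi>_def using \<phi>int[OF that] \<phi>n by (intro integral_nonneg) auto
  have IA: "I T \<le> A" if "T \<ge> 0" for T
    using LR_bound(2)[OF C' Ci that] C(2) by (simp add: I_def AUC_def)
  have Gge: "G T \<ge> \<Phi> T" if "T \<ge> 0" for T
    using IA[OF that] s_pos by (simp add: G_def)
  have \<Phi>mono: "\<Phi> T \<ge> \<Phi> M" if "0 \<le> M" "M \<le> T" for M T
    unfolding \<Phi>_def by (rule integral_subset_le) (use that \<phi>int \<phi>n in auto)
  have Gsmall: "\<exists>T\<ge>0. G T < e" if e: "e > 0" for e
  proof (rule ccontr)
    assume "\<not> ?thesis"
    then have ge: "\<And>T. T \<ge> 0 \<Longrightarrow> G T \<ge> e" by (meson not_less)
    have "LR k r C T \<le> (1 / ln 10) * (s * A - e)" if "T \<ge> 0" for T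
    proof -
      have "F T \<le> s * A - e" using ge[OF that] \<Phi>eq[OF that] by (simp add: G_def algebra_simps)
      then show ?thesis by (simp add: LR_def F_def divide_right_mono)
    qed
    then have "LRmax k r C \<le> (1 / ln 10) * (s * A - e)"
      unfolding LRmax_def by (intro cSUP_least) auto
    moreover have "(1 / ln 10) * (s * A - e) < (1 / ln 10) * (s * A)"
      using e by (simp add: divide_strict_right_mono)
    ultimately show False using opt by simp
  qed
  define M where "M = A / copt + 1"
  have M: "M > 0" using divide_pos_pos[OF A copt_pos] by (simp add: M_def)
  have \<Phi>M: "\<Phi> M > 0"
  proof (rule ccontr)
    assume "\<not> \<Phi> M > 0"
    then have "\<Phi> M = 0" using \<Phi>n[of M] M by simp
    then have "(\<phi> has_integral 0) {0..M}" using \<phi>int[of M] M unfolding \<Phi>_def by (metis integrable_integral less_imp_le)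
    then have N: "negligible {t\<in>{0..M}. \<phi> t \<noteq> 0}"
      by (rule nonneg_int0_negligible) (use \<phi>n in auto)
    have "I M = integral {0..M} (\<lambda>t. copt)"
      unfolding I_def
    proof (rule integral_spike[OF N])
      fix t assume "t \<in> {0..M} - {t\<in>{0..M}. \<phi> t \<noteq> 0}"
      then have "t \<ge> 0 \<and> \<phi> t = 0" by auto
      then show "copt = C t" using \<phi>pos[of t] by (metis less_irrefl)
    qed
    also have "\<dots> = M * copt" using M by simp
    also have "\<dots> = A + copt" using copt_pos by (simp add: M_def field_simps)
    finally show False using IA[of M] M copt_pos by simp
  qed
  have contG: "continuous_on {0..M} G"
  proof -
    have "continuous_on {0..M} (\<lambda>x. integral {0..x} \<phi>)"
      by (rule indefinite_integral_continuous_1) (use \<phi>int M in auto)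
    moreover have "continuous_on {0..M} (\<lambda>x. integral {0..x} C)"
      by (rule indefinite_integral_continuous_1) (use Cint M in auto)
    ultimately show ?thesis unfolding G_def \<Phi>_def I_def by (intro continuous_intros)
  qed
  obtain Ts where Ts: "Ts \<in> {0..M}" "\<And>y. y \<in> {0..M} \<Longrightarrow> G Ts \<le> G y"
    using continuous_attains_inf[OF compact_Icc _ contG] M by auto
  have GTs: "G Ts = 0"
  proof (rule ccontr)
    assume "G Ts \<noteq> 0"
    then have pos: "G Ts > 0" using Gge[of Ts] \<Phi>n[of Ts] Ts by auto
    obtain T where T: "T \<ge> 0" "G T < min (G Ts) (\<Phi> M)"
      using Gsmall[of "min (G Ts) (\<Phi> M)"] pos \<Phi>M by auto
    show False
    proof (cases "T \<le> M")
      case True then show False using Ts(2)[of T] T by auto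
    next
      case False then show False using Gge[of T] \<Phi>mono[of M T] T M by auto
    qed
  qed
  have Ts0: "Ts \<ge> 0" using Ts by auto
  have sA: "s * (A - I Ts) \<ge> 0" using IA[OF Ts0] s_pos by simp
  have \<Phi>Ts: "\<Phi> Ts = 0" and sA0: "s * (A - I Ts) = 0"
    using GTs sA \<Phi>n[OF Ts0] unfolding G_def by linarith+
  have ITs: "I Ts = A" using sA0 s_pos by simp
  have "(\<phi> has_integral 0) {0..Ts}" using \<phi>int[OF Ts0] \<Phi>Ts unfolding \<Phi>_def by (metis integrable_integral)
  then have N1: "negligible {t\<in>{0..Ts}. \<phi> t \<noteq> 0}"
    by (rule nonneg_int0_negligible) (use \<phi>n in auto)
  have "I Ts = integral {0..Ts} (\<lambda>t. copt)"
    unfolding I_def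
  proof (rule integral_spike[OF N1])
    fix t assume "t \<in> {0..Ts} - {t\<in>{0..Ts}. \<phi> t \<noteq> 0}"
    then have "t \<ge> 0 \<and> \<phi> t = 0" by auto
      then show "copt = C t" using \<phi>pos[of t] by (metis less_irrefl)
  qed
  also have "\<dots> = Ts * copt" using Ts0 by simp
  finally have TsA: "Ts = A / copt" using ITs copt_pos by (simp add: field_simps)
  have abs: "C absolutely_integrable_on {0..}" using nonnegative_absolutely_integrable_1[OF Ci] Cn by auto
  have "C absolutely_integrable_on {Ts..}"
    by (rule set_integrable_subset[OF abs]) (use Ts0 in auto)
  then have tailI: "C integrable_on {Ts..}" using set_lebesgue_integral_eq_integral(1) by blast
  have "(C has_integral (A + integral {Ts..} C)) ({0..Ts} \<union> {Ts..})"
  proof (rule has_integral_Un)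
    show "(C has_integral A) {0..Ts}" using Cint[OF Ts0] ITs unfolding I_def by (metis integrable_integral)
    show "(C has_integral integral {Ts..} C) {Ts..}" using tailI by (rule integrable_integral)
    have "{0..Ts} \<inter> {Ts..} = {Ts}" using Ts0 by auto
    then show "negligible ({0..Ts} \<inter> {Ts..})" by simp
  qed
  moreover have "{0..Ts} \<union> {Ts..} = {0::real..}" using Ts0 by auto
  ultimately have "(C has_integral (A + integral {Ts..} C)) {0..}" by simp
  then have "A + integral {Ts..} C = A" using CA by (rule has_integral_unique)
  then have "integral {Ts..} C = 0" by simp
  then have "(C has_integral 0) {Ts..}" using tailI by (metis integrable_integral)
  then have N2: "negligible {t\<in>{Ts..}. C t \<noteq> 0}"
    by (rule nonneg_int0_negligible) (use Cn Ts0 in auto)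
  have "{t\<in>{0..}. C t \<noteq> Cp A t} \<subseteq> {t\<in>{0..Ts}. \<phi> t \<noteq> 0} \<union> {t\<in>{Ts..}. C t \<noteq> 0}"
  proof
    fix t assume t: "t \<in> {t\<in>{0..}. C t \<noteq> Cp A t}"
    show "t \<in> {t\<in>{0..Ts}. \<phi> t \<noteq> 0} \<union> {t\<in>{Ts..}. C t \<noteq> 0}"
    proof (cases "t \<le> Ts")
      case True
      then have "Cp A t = copt" using t TsA by (simp add: Cp_def)
      then show ?thesis using True t \<phi>pos[of t] by auto
    next
      case False
      then have "Cp A t = 0" using t TsA by (simp add: Cp_def)
      then show ?thesis using False t by auto
    qed
  qed
  then show ?thesis by (rule negligible_subset[OF negligible_Un[OF N1 N2]])
qed

end


context kk begin

lemma main: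
  assumes A_pos: "A > 0"
  shows "\<exists>copt>0. k' copt = (k copt - r) / copt
          \<and> (\<forall>c>0. k' c = (k c - r) / c \<longrightarrow> c = copt)
          \<and> (let Copt = (\<lambda>t. if 0 \<le> t \<and> t \<le> A / copt then copt else 0) in
               profile Copt \<and> AUC Copt = A
             \<and> LRmax k r Copt = (1 / ln 10) * ((k copt - r) / copt) * A
             \<and> (\<forall>C. profile C \<and> AUC C = A \<longrightarrow> LRmax k r C \<le> LRmax k r Copt)
             \<and> (\<forall>C. profile C \<and> AUC C = A \<and> LRmax k r C = LRmax k r Copt \<longrightarrow>
                    {t\<in>{0..}. C t \<noteq> Copt t} \<in> null_sets lebesgue))"
  proof -
  have CpE: "(\<lambda>t. if 0 \<le> t \<and> t \<le> A / copt then copt else 0) = Cp A" by (simp add: Cp_def)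
  have sE: "(k copt - r) / copt = s" by (simp add: s_def)
  have f1: "copt > 0" by (rule copt_pos)
  have f2: "k' copt = (k copt - r) / copt" by (rule copt_eq)
  have f3: "\<forall>c>0. k' c = (k c - r) / c \<longrightarrow> c = copt"
    by (intro allI impI) (rule copt_uniq)
  have f4: "profile (Cp A)" "AUC (Cp A) = A" using Cp_profile[OF A_pos] by auto
  have f5: "LRmax k r (Cp A) = 1 / ln 10 * ((k copt - r) / copt) * A" using LRmax_Cp[OF A_pos] sE by simp
  have f6: "\<forall>C. profile C \<and> AUC C = A \<longrightarrow> LRmax k r C \<le> LRmax k r (Cp A)"
  proof (intro allI impI)
    fix C assume "profile C \<and> AUC C = A"
    then show "LRmax k r C \<le> LRmax k r (Cp A)" using LRmax_le[of C A] LRmax_Cp[OF A_pos] by simp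
  qed
  have f7: "\<forall>C. profile C \<and> AUC C = A \<and> LRmax k r C = LRmax k r (Cp A) \<longrightarrow>
                    {t\<in>{0..}. C t \<noteq> Cp A t} \<in> null_sets lebesgue"
  proof (intro allI impI)
    fix C assume H: "profile C \<and> AUC C = A \<and> LRmax k r C = LRmax k r (Cp A)"
    then have "LRmax k r C = (1 / ln 10) * (s * A)" using LRmax_Cp[OF A_pos] by simp
    then have "negligible {t\<in>{0..}. C t \<noteq> Cp A t}" using uniq_ae[OF A_pos, of C] H by blast
    then show "{t\<in>{0..}. C t \<noteq> Cp A t} \<in> null_sets lebesgue" by (simp add: negligible_iff_null_sets)
  qed
  show ?thesis
  proof (rule exI[of _ copt])
    show "0 < copt \<and> k' copt = (k copt - r) / copt
          \<and> (\<forall>c>0. k' c = (k c - r) / c \<longrightarrow> c = copt)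
          \<and> (let Copt = (\<lambda>t. if 0 \<le> t \<and> t \<le> A / copt then copt else 0) in
               profile Copt \<and> AUC Copt = A
             \<and> LRmax k r Copt = (1 / ln 10) * ((k copt - r) / copt) * A
             \<and> (\<forall>C. profile C \<and> AUC C = A \<longrightarrow> LRmax k r C \<le> LRmax k r Copt)
             \<and> (\<forall>C. profile C \<and> AUC C = A \<and> LRmax k r C = LRmax k r Copt \<longrightarrow>
                    {t\<in>{0..}. C t \<noteq> Copt t} \<in> null_sets lebesgue))"
      unfolding Let_def CpE using f1 f2 f3 f4 f5 f6 f7 by (intro conjI)
  qed
qed


end

theorem corollary1:
  fixes k k' k'' :: "real \<Rightarrow> real" and r kmax A :: real
  assumes r_pos: "r > 0"
    and k0: "k 0 = 0"
    and k_nonneg: "\<forall>c\<ge>0. k c \<ge> 0"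
    and k_cont: "continuous_on {0..} k"
    and k_mono: "strict_mono_on {0..} k"
    and k_d1: "\<forall>c>0. (k has_real_derivative k' c) (at c)"
    and k_d2: "\<forall>c>0. (k' has_real_derivative k'' c) (at c)"
    and k_lim: "(k \<longlongrightarrow> kmax) at_top"
    and k_shape: "(\<forall>c>0. k'' c < 0) \<or>
                  (\<exists>ci>0. (\<forall>c. 0 < c \<and> c < ci \<longrightarrow> k'' c > 0) \<and> (\<forall>c>ci. k'' c < 0))"
    and alpha: "kmax / r > 1"
    and A_pos: "A > 0"
  shows "\<exists>copt>0. k' copt = (k copt - r) / copt
          \<and> (\<forall>c>0. k' c = (k c - r) / c \<longrightarrow> c = copt)
          \<and> (let Copt = (\<lambda>t. if 0 \<le> t \<and> t \<le> A / copt then copt else 0) in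
               profile Copt \<and> AUC Copt = A
             \<and> LRmax k r Copt = (1 / ln 10) * ((k copt - r) / copt) * A
             \<and> (\<forall>C. profile C \<and> AUC C = A \<longrightarrow> LRmax k r C \<le> LRmax k r Copt)
             \<and> (\<forall>C. profile C \<and> AUC C = A \<and> LRmax k r C = LRmax k r Copt \<longrightarrow>
                    {t\<in>{0..}. C t \<noteq> Copt t} \<in> null_sets lebesgue))"
  proof -
  have L: "kk k k' k'' r kmax" unfolding kk_def
    using r_pos k0 k_nonneg k_cont k_mono k_d1 k_d2 k_lim k_shape alpha by (intro conjI)
  show ?thesis using kk.main[OF L A_pos] .
qed

end
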